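(* Let $G$ be a trigraph and let $\Gamma\subseteq\operatorname{Aut}(G)$ be a solvable group. Then there exists a partial contraction sequence of $G$ of width at most $4\Delta(G)$ whose last partition is the partition of $V(G)$ into $\Gamma$-orbits, i.e., which contracts $G$ to $G/\Gamma$.
   Context: A trigraph is a finite simple graph whose edges are each colored red or black. $\operatorname{Aut}(G)$ is the automorphism group of the underlying simple graph of $G$ (automorphisms need not preserve colors); $\Delta(G)$ is the maximum degree. The red degree of a vertex is the number of red edges incident to it. For a partition $\mathcal{P}$ of $V(G)$, the quotient trigraph $G/\mathcal{P}$ has vertex set $\mathcal{P}$; two distinct parts $U,W$ are joined by a black edge if every pair $\{u,w\}$ with $u\in U,w\in W$ is a black edge of $G$, are non-adjacent if no such pair is an edge, and are joined by a red edge otherwise; $G/\Gamma$ is the quotient by the partition into $\Gamma$-orbits. A partial contraction sequence of an $n$-vertex trigraph $G$ is a sequence $\mathcal{P}_n,\dots,\mathcal{P}_i$ of partitions of $V(G)$ where $\mathcal{P}_n$ is the partition into singletons and each $\mathcal{P}_j$ arises from $\mathcal{P}_{j+1}$ by merging two parts; its width is the maximum red degree over all $G/\mathcal{P}_j$ in the sequence. *)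

theory Defs
  imports "HOL-Algebra.Solvable_Groups" "HOL-Algebra.Bij"
begin

text \<open>A trigraph: finite vertex set V, edge set E of 2-element subsets of V,
  and the set R \<subseteq> E of red edges (the remaining edges E - R are black).\<close>

definition trigraph :: "'a set \<Rightarrow> 'a set set \<Rightarrow> 'a set set \<Rightarrow> bool" where
  "trigraph V E R \<longleftrightarrow> finite V \<and>
     E \<subseteq> {{u, v} | u v. u \<in> V \<and> v \<in> V \<and> u \<noteq> v} \<and> R \<subseteq> E"

definition Aut :: "'a set \<Rightarrow> 'a set set \<Rightarrow> ('a \<Rightarrow> 'a) set" where
  "Aut V E = {f \<in> Bij V. \<forall>u\<in>V. \<forall>v\<in>V. {u, v} \<in> E \<longleftrightarrow> {f u, f v} \<in> E}"

definition degree :: "'a set \<Rightarrow> 'a set set \<Rightarrow> 'a \<Rightarrow> nat" where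
  "degree V E v = card {w \<in> V. {v, w} \<in> E}"

definition max_degree :: "'a set \<Rightarrow> 'a set set \<Rightarrow> nat" where
  "max_degree V E = Max (insert 0 (degree V E ` V))"

definition black_pair :: "'a set set \<Rightarrow> 'a set set \<Rightarrow> 'a set \<Rightarrow> 'a set \<Rightarrow> bool" where
  "black_pair E R U W \<longleftrightarrow> (\<forall>u\<in>U. \<forall>w\<in>W. {u, w} \<in> E \<and> {u, w} \<notin> R)"

definition nonadj_pair :: "'a set set \<Rightarrow> 'a set \<Rightarrow> 'a set \<Rightarrow> bool" where
  "nonadj_pair E U W \<longleftrightarrow> (\<forall>u\<in>U. \<forall>w\<in>W. {u, w} \<notin> E)"

definition red_pair :: "'a set set \<Rightarrow> 'a set set \<Rightarrow> 'a set \<Rightarrow> 'a set \<Rightarrow> bool" where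
  "red_pair E R U W \<longleftrightarrow> \<not> black_pair E R U W \<and> \<not> nonadj_pair E U W"

definition red_degree :: "'a set set \<Rightarrow> 'a set set \<Rightarrow> 'a set set \<Rightarrow> 'a set \<Rightarrow> nat" where
  "red_degree E R P U = card {W \<in> P. W \<noteq> U \<and> red_pair E R U W}"

definition singletons :: "'a set \<Rightarrow> 'a set set" where
  "singletons V = {{v} | v. v \<in> V}"

definition merge_step :: "'a set set \<Rightarrow> 'a set set \<Rightarrow> bool" where
  "merge_step P Q \<longleftrightarrow> (\<exists>A\<in>P. \<exists>B\<in>P. A \<noteq> B \<and> Q = (P - {A, B}) \<union> {A \<union> B})"

text \<open>A partial contraction sequence, as the list [P_n, ..., P_i].\<close>
definition partial_contraction_seq :: "'a set \<Rightarrow> 'a set set list \<Rightarrow> bool" where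
  "partial_contraction_seq V Ps \<longleftrightarrow> Ps \<noteq> [] \<and> hd Ps = singletons V \<and>
     (\<forall>i. Suc i < length Ps \<longrightarrow> merge_step (Ps ! i) (Ps ! Suc i))"

definition seq_width_le :: "'a set set \<Rightarrow> 'a set set \<Rightarrow> 'a set set list \<Rightarrow> nat \<Rightarrow> bool" where
  "seq_width_le E R Ps d \<longleftrightarrow> (\<forall>P\<in>set Ps. \<forall>U\<in>P. red_degree E R P U \<le> d)"

definition orbit_partition :: "'a set \<Rightarrow> ('a \<Rightarrow> 'a) set \<Rightarrow> 'a set set" where
  "orbit_partition V \<Gamma> = {{g v | g. g \<in> \<Gamma>} | v. v \<in> V}"

end

theory Submission
  imports Defs "HOL-Algebra.Multiplicative_Group"
begin

definition adj :: "'a set set \<Rightarrow> 'a set \<Rightarrow> 'a set \<Rightarrow> bool" where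
  "adj E U W \<longleftrightarrow> (\<exists>u\<in>U. \<exists>w\<in>W. {u, w} \<in> E)"

definition okp :: "'a set set \<Rightarrow> nat \<Rightarrow> 'a set set \<Rightarrow> bool" where
  "okp E D P \<longleftrightarrow> finite P \<and> (\<forall>U\<in>P. card {W\<in>P. W \<noteq> U \<and> adj E U W} \<le> 4 * D)"

definition stp :: "'a set set \<Rightarrow> nat \<Rightarrow> 'a set set \<Rightarrow> 'a set set \<Rightarrow> bool" where
  "stp E D P Q \<longleftrightarrow> merge_step P Q \<and> okp E D P \<and> okp E D Q"

definition kerf :: "'a set \<Rightarrow> ('a \<Rightarrow> 'k) \<Rightarrow> 'a set set" where
  "kerf V f = {{y\<in>V. f y = f x} | x. x \<in> V}"

lemma kerf_merge:
  assumes a: "a \<in> V" and b: "b \<in> V" and ne: "f a \<noteq> f b"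
    and f': "\<And>x. x \<in> V \<Longrightarrow> f' x = (if f x = f b then f a else f x)"
  shows "merge_step (kerf V f) (kerf V f')"
proof -
  define A where "A = {y\<in>V. f y = f a}"
  define B where "B = {y\<in>V. f y = f b}"
  have AP: "A \<in> kerf V f" using a unfolding A_def kerf_def by blast
  have BP: "B \<in> kerf V f" using b unfolding B_def kerf_def by blast
  have AB: "A \<noteq> B" using a ne unfolding A_def B_def by blast
  have "kerf V f' = (kerf V f - {A, B}) \<union> {A \<union> B}"
  proof (intro equalityI subsetI)
    fix X assume "X \<in> kerf V f'"
    then obtain x where x: "x \<in> V" "X = {y\<in>V. f' y = f' x}" unfolding kerf_def by blast
    show "X \<in> (kerf V f - {A, B}) \<union> {A \<union> B}"
    proof (cases "f x = f a \<or> f x = f b")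
      case True
      then have "X = A \<union> B" using x f' ne unfolding A_def B_def by auto
      then show ?thesis by blast
    next
      case False
      have "\<And>y. y \<in> V \<Longrightarrow> f' y = f' x \<longleftrightarrow> f y = f x"
        using x(1) f' False by (auto split: if_split_asm)
      then have "X = {y\<in>V. f y = f x}" using x by auto
      moreover have "X \<noteq> A" "X \<noteq> B" using False x calculation unfolding A_def B_def by blast+
      ultimately show ?thesis using x unfolding kerf_def by blast
    qed
  next
    fix X assume X: "X \<in> (kerf V f - {A, B}) \<union> {A \<union> B}"
    show "X \<in> kerf V f'"
    proof (cases "X = A \<union> B")
      case True
      then have "X = {y\<in>V. f' y = f' a}" using a f' ne unfolding A_def B_def by auto
      then show ?thesis using a unfolding kerf_def by blast
    next
      case False
      then obtain x where x: "x \<in> V" "X = {y\<in>V. f y = f x}" "X \<noteq> A" "X \<noteq> B"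
        using X unfolding kerf_def by blast
      then have "f x \<noteq> f a" "f x \<noteq> f b" unfolding A_def B_def by auto
      then have "\<And>y. y \<in> V \<Longrightarrow> f' y = f' x \<longleftrightarrow> f y = f x"
        using x(1) f' by (auto split: if_split_asm)
      then have "X = {y\<in>V. f' y = f' x}" using x by auto
      then show ?thesis using x unfolding kerf_def by blast
    qed
  qed
  then show ?thesis unfolding merge_step_def using AP BP AB by blast
qed

definition lab :: "nat set \<Rightarrow> nat \<Rightarrow> nat" where
  "lab C j = Max {c\<in>C. c \<le> j}"

lemma lab_props:
  assumes "finite C" "0 \<in> C"
  shows "lab C j \<in> C" "lab C j \<le> j" "\<And>c. c \<in> C \<Longrightarrow> c \<le> j \<Longrightarrow> c \<le> lab C j"
proof -
  have fin: "finite {c\<in>C. c \<le> j}" using assms by auto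
  have ne: "{c\<in>C. c \<le> j} \<noteq> {}" using assms by auto
  show "lab C j \<in> C" "lab C j \<le> j" using Max_in[OF fin ne] unfolding lab_def by auto
  show "\<And>c. c \<in> C \<Longrightarrow> c \<le> j \<Longrightarrow> c \<le> lab C j" unfolding lab_def using fin by auto
qed

lemma lab_eqI:
  assumes "finite C" "0 \<in> C" "m \<in> C" "m \<le> j" "\<And>c. c \<in> C \<Longrightarrow> c \<le> j \<Longrightarrow> c \<le> m"
  shows "lab C j = m"
  using lab_props[OF assms(1,2)] assms by (meson le_antisym)

lemma lab_self: "finite C \<Longrightarrow> 0 \<in> C \<Longrightarrow> c \<in> C \<Longrightarrow> lab C c = c"
  by (rule lab_eqI) auto

lemma lab_remove:
  assumes fin: "finite C" and z: "0 \<in> C" and c: "c \<in> C" "c \<noteq> 0"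
  shows "lab (C - {c}) j = (if lab C j = c then lab C (c - 1) else lab C j)"
proof -
  note P = lab_props[OF fin z]
  have fin': "finite (C - {c})" and z': "0 \<in> C - {c}" using fin z c by auto
  show ?thesis
  proof (cases "lab C j = c")
    case True
    have "lab (C - {c}) j = lab C (c - 1)"
    proof (rule lab_eqI[OF fin' z'])
      have "lab C (c - 1) \<in> C" "lab C (c - 1) \<le> c - 1" using P by auto
      then show "lab C (c - 1) \<in> C - {c}" "lab C (c - 1) \<le> j" using True P(2)[of j] c by auto
      fix d assume "d \<in> C - {c}" "d \<le> j"
      then have "d \<le> c" "d \<noteq> c" "d \<in> C" using P(3)[of d j] True by auto
      then show "d \<le> lab C (c - 1)" using P(3)[of d "c - 1"] by auto
    qed
    then show ?thesis using True by simp
  next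
    case False
    have "lab (C - {c}) j = lab C j"
      by (rule lab_eqI[OF fin' z']) (use P False in auto)
    then show ?thesis using False by simp
  qed
qed

definition Cs :: "nat \<Rightarrow> nat \<Rightarrow> nat set" where
  "Cs s L = {j. j < L \<and> 2 ^ s dvd j}"

lemma lab_coarse:
  assumes fin: "finite C" and z: "0 \<in> C" and sub: "\<And>c. c \<in> C \<Longrightarrow> q dvd c" and q: "0 < q"
  shows "lab C j = lab C (q * (j div q))"
proof -
  have "{c\<in>C. c \<le> j} = {c\<in>C. c \<le> q * (j div q)}"
  proof (intro equalityI subsetI)
    fix c assume "c \<in> {c\<in>C. c \<le> j}"
    then obtain t where "c = q * t" "c \<in> C" "c \<le> j" using sub by (auto elim!: dvdE)
    then have "t \<le> j div q" using q by (metis div_le_mono nonzero_mult_div_cancel_left not_gr0 q)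
    then show "c \<in> {c\<in>C. c \<le> q * (j div q)}" using \<open>c = q * t\<close> \<open>c \<in> C\<close> by auto
  next
    fix c assume "c \<in> {c\<in>C. c \<le> q * (j div q)}"
    moreover have "q * (j div q) \<le> j" by simp
    ultimately show "c \<in> {c\<in>C. c \<le> j}" using le_trans by blast
  qed
  then show ?thesis unfolding lab_def by simp
qed

lemma lab_interval:
  assumes fin: "finite C" and z: "0 \<in> C" and sub: "Cs (Suc s) L \<subseteq> C"
    and j: "j < L" and l: "lab C j = c"
  shows "j < c + 2 ^ Suc s"
proof (rule ccontr)
  assume "\<not> j < c + 2 ^ Suc s"
  define m where "m = 2 ^ Suc s * (c div 2 ^ Suc s + 1)"
  define q :: nat where "q = 2 ^ Suc s"
  have q0: "0 < q" unfolding q_def by simp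
  have e: "q * (c div q) + c mod q = c" by (rule mult_div_mod_eq)
  have "c mod q < q" using q0 by simp
  have "c < q * (c div q + 1)" using e \<open>c mod q < q\<close> by (simp only: distrib_left mult_1_right)
  then have "c < m" unfolding m_def q_def by simp
  have "q * (c div q + 1) \<le> c + q" using e by (simp only: distrib_left mult_1_right)
  then have "m \<le> c + 2 ^ Suc s" unfolding m_def q_def by simp
  then have "m \<le> j" using \<open>\<not> j < c + 2 ^ Suc s\<close> by simp
  then have "m \<in> C" using sub j unfolding Cs_def m_def by auto
  then have "m \<le> c" using lab_props(3)[OF fin z \<open>m \<in> C\<close> \<open>m \<le> j\<close>] l by simp
  then show False using \<open>c < m\<close> by simp
qed

lemma card4: "card {a, b, c, d::nat} \<le> 4"
proof -
  have "{a, b, c, d} = set [a, b, c, d]" by simp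
  then show ?thesis using card_length[of "[a,b,c,d]"] by simp
qed

lemma window0:
  fixes L q a0 :: nat
  assumes L: "0 < L" and q: "0 < q" and a0: "a0 < L"
  shows "card ((\<lambda>k. (k mod L) div q) ` {a0..<a0 + 2 * q}) \<le> 4"
proof -
  define x0 where "x0 = a0 div q"
  have lowk: "x0 \<le> k div q" if "a0 \<le> k" for k unfolding x0_def by (rule div_le_mono[OF that])
  have "\<exists>T. finite T \<and> card T \<le> 4 \<and> (\<lambda>k. (k mod L) div q) ` {a0..<a0 + 2 * q} \<subseteq> T"
  proof (cases "a0 + 2 * q \<le> L")
    case True
    have "(\<lambda>k. (k mod L) div q) ` {a0..<a0 + 2 * q} \<subseteq> {x0, x0+1, x0+2, x0}"
    proof
      fix z assume "z \<in> (\<lambda>k. (k mod L) div q) ` {a0..<a0 + 2 * q}"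
      then obtain k where k: "a0 \<le> k" "k < a0 + 2 * q" "z = (k mod L) div q" by auto
      have "k mod L = k" using k True by simp
      have "k div q \<le> (a0 + 2 * q) div q" using k by (intro div_le_mono) simp
      also have "\<dots> = x0 + 2" unfolding x0_def using q by simp
      finally show "z \<in> {x0, x0+1, x0+2, x0}" using lowk[OF k(1)] k(3) \<open>k mod L = k\<close> by auto
    qed
    then show ?thesis using card4 by (intro exI[where x="{x0, x0+1, x0+2, x0}"]) simp
  next
    case False
    define u where "u = L - 1 - a0"
    define w where "w = a0 + 2 * q - L - 1"
    have uw: "u + w = 2 * q - 2" "a0 + u = L - 1" using False a0 unfolding u_def w_def by auto
    have first: "k div q \<le> (a0 + u) div q" if "k < L" for k
      using that uw by (intro div_le_mono) simp
    have second: "(k mod L) div q \<le> w div q" if "L \<le> k" "k < a0 + 2 * q" for k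
    proof -
      have "k mod L = (k - L) mod L" using le_mod_geq[OF that(1)] .
      also have "\<dots> \<le> k - L" by simp
      also have "\<dots> \<le> w" using that False unfolding w_def by simp
      finally show ?thesis using div_le_mono by blast
    qed
    have hb: "(a0 + u) div q \<le> x0 + 2" "w div q \<le> 1"
    proof -
      have "(a0 + u) div q \<le> (a0 + 2 * q) div q" using uw q by (intro div_le_mono) simp
      then show "(a0 + u) div q \<le> x0 + 2" unfolding x0_def using q by simp
      have "w < 2 * q" using uw q by simp
      then show "w div q \<le> 1" using less_mult_imp_div_less[of w 2 q] by simp
    qed
    show ?thesis
    proof (cases "u < q")
      case True
      have u1: "(a0 + u) div q \<le> x0 + 1"
      proof -
        have "(a0 + u) div q \<le> (a0 + q) div q" using True by (intro div_le_mono) simp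
        then show ?thesis unfolding x0_def using q by (simp add: div_add_self2)
      qed
      have "(\<lambda>k. (k mod L) div q) ` {a0..<a0 + 2 * q} \<subseteq> {x0, x0+1, 0, 1}"
      proof
        fix z assume "z \<in> (\<lambda>k. (k mod L) div q) ` {a0..<a0 + 2 * q}"
        then obtain k where k: "a0 \<le> k" "k < a0 + 2 * q" "z = (k mod L) div q" by auto
        show "z \<in> {x0, x0+1, 0, 1}"
        proof (cases "k < L")
          case True
          then show ?thesis using first[OF True] u1 lowk[OF k(1)] k(3) by auto
        next
          case False
          then show ?thesis using second[of k] k hb by auto
        qed
      qed
      then show ?thesis using card4 by (intro exI[where x="{x0, x0+1, 0, 1}"]) simp
    next
      case False
      have "w < q" using False uw q by linarith
      then have w0: "w div q = 0" by simp
      have "(\<lambda>k. (k mod L) div q) ` {a0..<a0 + 2 * q} \<subseteq> {x0, x0+1, x0+2, 0}"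
      proof
        fix z assume "z \<in> (\<lambda>k. (k mod L) div q) ` {a0..<a0 + 2 * q}"
        then obtain k where k: "a0 \<le> k" "k < a0 + 2 * q" "z = (k mod L) div q" by auto
        show "z \<in> {x0, x0+1, x0+2, 0}"
        proof (cases "k < L")
          case True
          then show ?thesis using first[OF True] hb lowk[OF k(1)] k(3) by auto
        next
          case False
          then show ?thesis using second[of k] k w0 by auto
        qed
      qed
      then show ?thesis using card4 by (intro exI[where x="{x0, x0+1, x0+2, 0}"]) simp
    qed
  qed
  then obtain T where "finite T" "card T \<le> 4" "(\<lambda>k. (k mod L) div q) ` {a0..<a0 + 2 * q} \<subseteq> T" by blast
  then show ?thesis using card_mono[of T] le_trans by blast
qed

lemma window:
  fixes L q a :: nat
  assumes L: "0 < L" and q: "0 < q"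
  shows "card ((\<lambda>k. (k mod L) div q) ` {a..<a + 2 * q}) \<le> 4"
proof -
  define a0 where "a0 = a mod L"
  define d where "d = L * (a div L)"
  have ad: "a = a0 + d" unfolding a0_def d_def by simp
  have eq: "{a..<a + 2 * q} = (\<lambda>k. k + d) ` {a0..<a0 + 2 * q}"
    unfolding ad by (simp add: image_add_atLeastLessThan' ac_simps)
  have "(\<lambda>k. (k mod L) div q) ` {a..<a + 2 * q}
      = (\<lambda>k. ((k + d) mod L) div q) ` {a0..<a0 + 2 * q}" by (simp only: eq image_image)
  also have "\<dots> = (\<lambda>k. (k mod L) div q) ` {a0..<a0 + 2 * q}"
    unfolding d_def by simp
  finally show ?thesis using window0[OF L q] L unfolding a0_def by simp
qed

locale cyc =
  fixes V :: "'a set" and E :: "'a set set" and S :: "'a \<Rightarrow> 'a \<Rightarrow> bool"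
    and h :: "'a \<Rightarrow> 'a" and n :: nat and D :: nat
  assumes finV: "finite V"
    and S_V: "S x y \<Longrightarrow> x \<in> V \<and> y \<in> V"
    and S_refl: "x \<in> V \<Longrightarrow> S x x"
    and S_sym: "S x y \<Longrightarrow> S y x"
    and S_trans: "S x y \<Longrightarrow> S y z \<Longrightarrow> S x z"
    and h_V: "x \<in> V \<Longrightarrow> h x \<in> V"
    and h_S: "x \<in> V \<Longrightarrow> y \<in> V \<Longrightarrow> S (h x) (h y) \<longleftrightarrow> S x y"
    and h_E: "x \<in> V \<Longrightarrow> y \<in> V \<Longrightarrow> {h x, h y} \<in> E \<longleftrightarrow> {x, y} \<in> E"
    and n_pos: "0 < n" and h_n: "x \<in> V \<Longrightarrow> (h ^^ n) x = x"
    and unif: "v \<in> V \<Longrightarrow> x \<in> V \<Longrightarrow> y \<in> V \<Longrightarrow> S v x \<Longrightarrow> {x, y} \<in> E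
               \<Longrightarrow> \<exists>w\<in>V. {v, w} \<in> E \<and> S w y"
    and deg: "v \<in> V \<Longrightarrow> card {w\<in>V. {v, w} \<in> E} \<le> D"
begin

abbreviation hp :: "nat \<Rightarrow> 'a \<Rightarrow> 'a" where "hp i \<equiv> h ^^ i"

lemma hp_V: "x \<in> V \<Longrightarrow> hp i x \<in> V"
  by (induct i) (auto simp: h_V)

lemma hp_add: "hp (i + j) x = hp i (hp j x)"
  by (simp add: funpow_add)

lemma hp_S: "x \<in> V \<Longrightarrow> y \<in> V \<Longrightarrow> S (hp i x) (hp i y) \<longleftrightarrow> S x y"
  by (induct i) (auto simp: h_S hp_V)

lemma hp_E: "x \<in> V \<Longrightarrow> y \<in> V \<Longrightarrow> {hp i x, hp i y} \<in> E \<longleftrightarrow> {x, y} \<in> E"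
  by (induct i) (auto simp: h_E hp_V)

lemma hp_nk: "x \<in> V \<Longrightarrow> hp (n * k) x = x"
proof (induct k)
  case (Suc k)
  have "hp (n * Suc k) x = hp n (hp (n * k) x)" by (simp add: hp_add[symmetric])
  then show ?case using Suc h_n by simp
qed simp

lemma hp_back: "x \<in> V \<Longrightarrow> hp (n * i - i) (hp i x) = x"
proof -
  assume x: "x \<in> V"
  have "i \<le> n * i" using n_pos by simp
  then have "hp (n * i - i) (hp i x) = hp (n * i) x" by (simp add: hp_add[symmetric])
  then show ?thesis using hp_nk[OF x] by simp
qed

definition S' :: "'a \<Rightarrow> 'a \<Rightarrow> bool" where
  "S' x y \<longleftrightarrow> x \<in> V \<and> y \<in> V \<and> (\<exists>i. S (hp i x) y)"

lemma S'_refl: "x \<in> V \<Longrightarrow> S' x x"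
  unfolding S'_def using S_refl[of x] by (auto intro: exI[of _ 0])

lemma S'_sym: assumes "S' x y" shows "S' y x"
proof -
  obtain i where x: "x \<in> V" and y: "y \<in> V" and i: "S (hp i x) y" using assms unfolding S'_def by blast
  have "S (hp (n * i - i) (hp i x)) (hp (n * i - i) y)" using i hp_S hp_V x y by blast
  then have "S x (hp (n * i - i) y)" using hp_back[OF x] by simp
  then show ?thesis unfolding S'_def using x y S_sym by blast
qed

lemma S'_trans: assumes "S' x y" "S' y z" shows "S' x z"
proof -
  obtain i j where x: "x \<in> V" and y: "y \<in> V" and z: "z \<in> V" and i: "S (hp i x) y"
    and j: "S (hp j y) z" using assms unfolding S'_def by blast
  have "S (hp j (hp i x)) (hp j y)" using i hp_S hp_V x y by blast
  then have "S (hp (j + i) x) z" using S_trans[OF _ j] by (simp add: hp_add)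
  then show ?thesis unfolding S'_def using x z by blast
qed

lemma S_S': "S x y \<Longrightarrow> S' x y"
  unfolding S'_def using S_V by (auto intro: exI[of _ 0])

definition rep :: "'a \<Rightarrow> 'a" where "rep x = (SOME r. S' r x)"

lemma rep: "x \<in> V \<Longrightarrow> S' (rep x) x"
  unfolding rep_def by (rule someI[of _ x]) (rule S'_refl)

lemma rep_V: "x \<in> V \<Longrightarrow> rep x \<in> V"
  using rep S'_def by blast

lemma rep_eq: assumes "S' x y" shows "rep x = rep y"
proof -
  have "(\<lambda>r. S' r x) = (\<lambda>r. S' r y)"
  proof (rule ext)
    fix r show "S' r x = S' r y" using S'_trans[OF _ assms] S'_trans[OF _ S'_sym[OF assms]] by blast
  qed
  then show ?thesis unfolding rep_def by simp
qed

lemma rep_rep: "x \<in> V \<Longrightarrow> rep (rep x) = rep x"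
  using rep_eq[OF rep] .

definition Lp :: "'a \<Rightarrow> nat" where "Lp r = (LEAST L. 0 < L \<and> S (hp L r) r)"

lemma Lp: assumes r: "r \<in> V" shows "0 < Lp r" "S (hp (Lp r) r) r" "Lp r \<le> n"
proof -
  have ex: "0 < n \<and> S (hp n r) r" using n_pos hp_nk[OF r, of 1] S_refl[OF r] by simp
  show "0 < Lp r" "S (hp (Lp r) r) r" using LeastI[of "\<lambda>L. 0 < L \<and> S (hp L r) r", OF ex]
    unfolding Lp_def by auto
  show "Lp r \<le> n" unfolding Lp_def using ex by (rule Least_le)
qed

lemma Lp_min: "r \<in> V \<Longrightarrow> 0 < k \<Longrightarrow> k < Lp r \<Longrightarrow> \<not> S (hp k r) r"
  unfolding Lp_def using not_less_Least by blast

lemma per: assumes r: "r \<in> V" shows "S (hp (k * Lp r) r) r"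
proof (induct k)
  case 0 then show ?case using S_refl r by simp
next
  case (Suc k)
  have "S (hp (Lp r) (hp (k * Lp r) r)) (hp (Lp r) r)" using Suc hp_S hp_V r by blast
  then have "S (hp (Suc k * Lp r) r) (hp (Lp r) r)" by (simp add: hp_add[symmetric] add.commute)
  then show ?case using S_trans[OF _ Lp(2)[OF r]] by blast
qed

lemma per_mod: assumes r: "r \<in> V" shows "S (hp j r) (hp (j mod Lp r) r)"
proof -
  have "hp j r = hp (j mod Lp r + (j div Lp r) * Lp r) r" by simp
  also have "\<dots> = hp (j mod Lp r) (hp ((j div Lp r) * Lp r) r)" by (rule hp_add)
  finally have "hp j r = hp (j mod Lp r) (hp ((j div Lp r) * Lp r) r)" .
  moreover have "S (hp (j mod Lp r) (hp ((j div Lp r) * Lp r) r)) (hp (j mod Lp r) r)"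
    using per[OF r] hp_S hp_V r by blast
  ultimately show ?thesis by simp
qed

lemma uniq0: assumes r: "r \<in> V" and jk: "j < k" "k < Lp r" and s: "S (hp j r) (hp k r)"
  shows False
proof -
  have "hp k r = hp j (hp (k - j) r)" using jk by (simp add: hp_add[symmetric])
  then have "S r (hp (k - j) r)" using s hp_S[OF r hp_V[OF r], of j "k - j"] by simp
  then have "S (hp (k - j) r) r" by (rule S_sym)
  then show False using Lp_min[OF r, of "k - j"] jk by auto
qed

lemma uniq: "r \<in> V \<Longrightarrow> j < Lp r \<Longrightarrow> k < Lp r \<Longrightarrow> S (hp j r) (hp k r) \<Longrightarrow> j = k"
  using uniq0[of r j k] uniq0[of r k j] S_sym by (metis linorder_neqE_nat)

definition pos :: "'a \<Rightarrow> nat" where "pos x = (LEAST j. S (hp j (rep x)) x)"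

lemma pos: assumes x: "x \<in> V" shows "pos x < Lp (rep x)" "S (hp (pos x) (rep x)) x"
proof -
  obtain i where i: "S (hp i (rep x)) x" using rep[OF x] unfolding S'_def by blast
  show "S (hp (pos x) (rep x)) x" unfolding pos_def using i by (rule LeastI)
  have "S (hp (i mod Lp (rep x)) (rep x)) x"
    using S_trans[OF S_sym[OF per_mod[OF rep_V[OF x], of i]] i] .
  then have "pos x \<le> i mod Lp (rep x)" unfolding pos_def by (rule Least_le)
  also have "\<dots> < Lp (rep x)" using Lp(1)[OF rep_V[OF x]] by simp
  finally show "pos x < Lp (rep x)" .
qed

lemma pos_unique: assumes x: "x \<in> V" and j: "j < Lp (rep x)" and s: "S (hp j (rep x)) x"
  shows "pos x = j"
proof -
  have "S (hp j (rep x)) (hp (pos x) (rep x))" using S_trans[OF s S_sym[OF pos(2)[OF x]]] .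
  then show ?thesis using uniq[OF rep_V[OF x] j pos(1)[OF x]] by simp
qed

lemma rep_hp: assumes x: "x \<in> V" shows "rep (hp i x) = rep x"
proof -
  have "S' x (hp i x)" unfolding S'_def using x hp_V[OF x] S_refl[OF hp_V[OF x, of i]] by blast
  then show ?thesis using rep_eq by simp
qed

lemma pos_hp: assumes x: "x \<in> V" shows "pos (hp i x) = (pos x + i) mod Lp (rep x)"
proof -
  define r where "r = rep x"
  have r: "r \<in> V" using rep_V[OF x] r_def by simp
  have "S (hp i (hp (pos x) r)) (hp i x)" using pos(2)[OF x] hp_S[OF hp_V[OF r] x] r_def by simp
  then have a: "S (hp (i + pos x) r) (hp i x)" by (simp add: hp_add)
  have "S (hp ((pos x + i) mod Lp r) r) (hp i x)"
    using S_trans[OF S_sym[OF per_mod[OF r, of "i + pos x"]] a] by (simp add: add.commute)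
  moreover have "(pos x + i) mod Lp r < Lp r" using Lp(1)[OF r] by simp
  ultimately show ?thesis using pos_unique[OF hp_V[OF x]] rep_hp[OF x] r_def by simp
qed

lemma rep_of_rep: "r \<in> rep ` V \<Longrightarrow> r \<in> V \<and> rep r = r"
  using rep_V rep_rep by auto

lemma pos_hp_rep: assumes r: "r \<in> rep ` V" and j: "j < Lp r"
  shows "rep (hp j r) = r" "pos (hp j r) = j"
proof -
  have rV: "r \<in> V" "rep r = r" using rep_of_rep[OF r] by auto
  show "rep (hp j r) = r" using rep_hp[OF rV(1)] rV by simp
  have "pos r = 0" using pos_unique[OF rV(1), of 0] Lp(1)[OF rV(1)] rV S_refl by simp
  then show "pos (hp j r) = j" using pos_hp[OF rV(1)] rV j by simp
qed

lemma S_key: assumes "S x y" shows "rep x = rep y" "pos x = pos y"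
proof -
  have x: "x \<in> V" and y: "y \<in> V" using S_V assms by auto
  show "rep x = rep y" using rep_eq S_S' assms by blast
  moreover have "S (hp (pos x) (rep x)) y" using pos(2)[OF x] assms by (rule S_trans)
  ultimately show "pos x = pos y"
    using pos_unique[OF y, of "pos x"] pos(1)[OF x] by simp
qed

lemma key_S: assumes x: "x \<in> V" and y: "y \<in> V" and "rep x = rep y" "pos x = pos y"
  shows "S x y"
proof -
  have "S (hp (pos x) (rep x)) y" using pos(2)[OF y] assms by simp
  then show ?thesis using S_trans[OF S_sym[OF pos(2)[OF x]]] by blast
qed

end

lemma kerf_image: "kerf V f = (\<lambda>x. {y\<in>V. f y = f x}) ` V"
  unfolding kerf_def by blast

lemma kerf_cong: "(\<And>x. x \<in> V \<Longrightarrow> f x = g x) \<Longrightarrow> kerf V f = kerf V g"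
  unfolding kerf_def by (intro Collect_cong ex_cong1) auto

context cyc
begin

definition key :: "('a \<Rightarrow> nat set) \<Rightarrow> 'a \<Rightarrow> 'a \<times> nat" where
  "key ct x = (rep x, lab (ct (rep x)) (pos x))"

definition Pc :: "('a \<Rightarrow> nat set) \<Rightarrow> 'a set set" where
  "Pc ct = kerf V (key ct)"

definition valid :: "('a \<Rightarrow> nat set) \<Rightarrow> nat \<Rightarrow> bool" where
  "valid ct s \<longleftrightarrow> (\<forall>r\<in>V. Cs (Suc s) (Lp r) \<subseteq> ct r \<and> ct r \<subseteq> Cs s (Lp r))"

lemma valid_props:
  assumes v: "valid ct s" and r: "r \<in> V"
  shows "finite (ct r)" "0 \<in> ct r" "\<And>c. c \<in> ct r \<Longrightarrow> c < Lp r \<and> 2 ^ s dvd c"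
    "Cs (Suc s) (Lp r) \<subseteq> ct r"
proof -
  have a: "Cs (Suc s) (Lp r) \<subseteq> ct r" "ct r \<subseteq> Cs s (Lp r)" using v r unfolding valid_def by auto
  then show "Cs (Suc s) (Lp r) \<subseteq> ct r" by simp
  have "ct r \<subseteq> {..<Lp r}" using a(2) unfolding Cs_def by auto
  then show "finite (ct r)" using finite_subset by blast
  show "0 \<in> ct r" using a(1) Lp(1)[OF r] unfolding Cs_def by auto
  show "\<And>c. c \<in> ct r \<Longrightarrow> c < Lp r \<and> 2 ^ s dvd c" using a(2) unfolding Cs_def by auto
qed

lemma key_eq_S: "S x y \<Longrightarrow> key ct x = key ct y"
  unfolding key_def using S_key by simp

lemma ok_valid:
  assumes v: "valid ct s"
  shows "okp E D (Pc ct)"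
proof -
  define q :: nat where "q = 2 ^ s"
  have q0: "0 < q" unfolding q_def by simp
  define Blk where "Blk z = {y\<in>V. key ct y = key ct z}" for z
  have PcB: "Pc ct = Blk ` V" unfolding Pc_def Blk_def kerf_image by simp
  have finP: "finite (Pc ct)" unfolding PcB using finV by simp
  have bound: "card {W\<in>Pc ct. W \<noteq> U \<and> adj E U W} \<le> 4 * D" if U: "U \<in> Pc ct" for U
  proof -
    obtain x0 where x0: "x0 \<in> V" "U = Blk x0" using U PcB by auto
    define r where "r = rep x0"
    have r: "r \<in> V" using rep_V[OF x0(1)] r_def by simp
    define C where "C = ct r"
    define c where "c = lab C (pos x0)"
    note vp = valid_props[OF v r, folded C_def]
    define N where "N = {w\<in>V. {r, w} \<in> E}"
    have finN: "finite N" using finV N_def by simp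
    have cardN: "card N \<le> D" using deg[OF r] N_def by simp
    have sub: "{W\<in>Pc ct. W \<noteq> U \<and> adj E U W} \<subseteq> (\<Union>w\<in>N. (\<lambda>i. Blk (hp i w)) ` {c..<c + 2 * q})"
    proof
      fix W assume "W \<in> {W\<in>Pc ct. W \<noteq> U \<and> adj E U W}"
      then have W: "W \<in> Pc ct" "adj E U W" by auto
      obtain y0 where y0: "y0 \<in> V" "W = Blk y0" using W(1) PcB by auto
      obtain x y where xy: "x \<in> U" "y \<in> W" "{x, y} \<in> E" using W(2) unfolding adj_def by blast
      have x: "x \<in> V" "key ct x = key ct x0" using xy(1) x0(2) Blk_def by auto
      have y: "y \<in> V" "key ct y = key ct y0" using xy(2) y0(2) Blk_def by auto
      have rx: "rep x = r" and cx: "lab C (pos x) = c"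
        using x(2) unfolding key_def r_def C_def c_def by auto
      define i where "i = pos x"
      have ic: "c \<le> i" using lab_props(2)[OF vp(1,2), of i] cx i_def by simp
      have ic2: "i < c + 2 * q"
        using lab_interval[OF vp(1,2) vp(4) _ cx] pos(1)[OF x(1)] rx i_def q_def by simp
      have s1: "S (hp i r) x" using pos(2)[OF x(1)] rx i_def by simp
      define k where "k = n * i - i"
      have "S (hp k (hp i r)) (hp k x)" using s1 hp_S[OF hp_V[OF r] x(1)] by simp
      then have s2: "S r (hp k x)" using hp_back[OF r] k_def by simp
      have e2: "{hp k x, hp k y} \<in> E" using hp_E[OF x(1) y(1)] xy(3) by simp
      obtain w where w: "w \<in> V" "{r, w} \<in> E" "S w (hp k y)"
        using unif[OF r hp_V[OF x(1)] hp_V[OF y(1)] s2 e2] by blast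
      have "S (hp i w) (hp i (hp k y))" using w(3) hp_S[OF w(1) hp_V[OF y(1)]] by simp
      moreover have "hp i (hp k y) = y"
      proof -
        have "i \<le> n * i" using n_pos by simp
        then have "hp i (hp k y) = hp (n * i) y" unfolding k_def by (simp add: hp_add[symmetric])
        then show ?thesis using hp_nk[OF y(1)] by simp
      qed
      ultimately have "S (hp i w) y" by simp
      then have "key ct (hp i w) = key ct y0" using key_eq_S y(2) by simp
      then have "Blk (hp i w) = W" using y0(2) Blk_def by simp
      moreover have "w \<in> N" using w N_def by simp
      ultimately show "W \<in> (\<Union>w\<in>N. (\<lambda>i. Blk (hp i w)) ` {c..<c + 2 * q})"
        using ic ic2 by force
    qed
    have each: "card ((\<lambda>i. Blk (hp i w)) ` {c..<c + 2 * q}) \<le> 4" if w: "w \<in> V" for w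
    proof -
      define rw where "rw = rep w"
      have rw: "rw \<in> V" using rep_V[OF w] rw_def by simp
      note vw = valid_props[OF v rw]
      define F where "F t = {y\<in>V. key ct y = (rw, lab (ct rw) (q * t))}" for t
      define g where "g k = (k mod Lp rw) div q" for k
      have "(\<lambda>i. Blk (hp i w)) ` {c..<c + 2 * q} \<subseteq> F ` (g ` {pos w + c..<pos w + c + 2 * q})"
      proof
        fix z assume "z \<in> (\<lambda>i. Blk (hp i w)) ` {c..<c + 2 * q}"
        then obtain i where i: "i \<in> {c..<c + 2 * q}" "z = Blk (hp i w)" by blast
        have "key ct (hp i w) = (rw, lab (ct rw) ((pos w + i) mod Lp rw))"
          unfolding key_def using rep_hp[OF w] pos_hp[OF w] rw_def by simp
        also have "\<dots> = (rw, lab (ct rw) (q * g (pos w + i)))"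
          unfolding g_def using lab_coarse[OF vw(1,2) _ q0] vw(3) q_def by simp
        finally have "z = F (g (pos w + i))" using i(2) unfolding Blk_def F_def by simp
        moreover have "pos w + i \<in> {pos w + c..<pos w + c + 2 * q}" using i(1) by simp
        ultimately show "z \<in> F ` (g ` {pos w + c..<pos w + c + 2 * q})" by blast
      qed
      then have "card ((\<lambda>i. Blk (hp i w)) ` {c..<c + 2 * q}) \<le> card (F ` (g ` {pos w + c..<pos w + c + 2 * q}))"
        by (intro card_mono) auto
      also have "\<dots> \<le> card (g ` {pos w + c..<pos w + c + 2 * q})" by (rule card_image_le) simp
      also have "\<dots> \<le> 4" unfolding g_def using window[OF Lp(1)[OF rw] q0] by simp
      finally show ?thesis .
    qed
    have "card {W\<in>Pc ct. W \<noteq> U \<and> adj E U W} \<le> card (\<Union>w\<in>N. (\<lambda>i. Blk (hp i w)) ` {c..<c + 2 * q})"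
      using sub finN by (intro card_mono) auto
    also have "\<dots> \<le> (\<Sum>w\<in>N. card ((\<lambda>i. Blk (hp i w)) ` {c..<c + 2 * q}))"
      using finN by (rule card_UN_le)
    also have "\<dots> \<le> (\<Sum>w\<in>N. 4)" using each N_def by (intro sum_mono) auto
    also have "\<dots> = 4 * card N" by simp
    also have "\<dots> \<le> 4 * D" using cardN by simp
    finally show ?thesis .
  qed
  show ?thesis unfolding okp_def using finP bound by blast
qed

end

context cyc
begin

definition Dset :: "('a \<Rightarrow> nat set) \<Rightarrow> nat \<Rightarrow> ('a \<times> nat) set" where
  "Dset ct s = {(r, c). r \<in> rep ` V \<and> c \<in> ct r \<and> c \<notin> Cs (Suc s) (Lp r)}"

lemma level:
  assumes "valid ct s"
  shows "(stp E D)\<^sup>*\<^sup>* (Pc ct) (Pc (\<lambda>r. Cs (Suc s) (Lp r)))"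
  using assms
proof (induction "card (Dset ct s)" arbitrary: ct rule: less_induct)
  case less
  note v = less.prems
  have finD: "finite (Dset ct s)"
  proof -
    have "Dset ct s \<subseteq> rep ` V \<times> {..<n}"
    proof
      fix p assume "p \<in> Dset ct s"
      then obtain r c where p: "p = (r, c)" "r \<in> rep ` V" "c \<in> ct r" unfolding Dset_def by blast
      have r: "r \<in> V" using p(2) rep_V by auto
      have "c < Lp r" using valid_props(3)[OF v r p(3)] by simp
      then have "c < n" using Lp(3)[OF r] by simp
      then show "p \<in> rep ` V \<times> {..<n}" using p by simp
    qed
    then show ?thesis using finV finite_subset by blast
  qed
  show ?case
  proof (cases "Dset ct s = {}")
    case True
    have "Pc ct = Pc (\<lambda>r. Cs (Suc s) (Lp r))" unfolding Pc_def
    proof (rule kerf_cong)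
      fix x assume x: "x \<in> V"
      have r: "rep x \<in> V" using rep_V[OF x] .
      have "ct (rep x) = Cs (Suc s) (Lp (rep x))"
        using valid_props(4)[OF v r] True x unfolding Dset_def by auto
      then show "key ct x = key (\<lambda>r. Cs (Suc s) (Lp r)) x" unfolding key_def by simp
    qed
    then show ?thesis by simp
  next
    case False
    then obtain r c where rc: "(r, c) \<in> Dset ct s" by auto
    have r: "r \<in> rep ` V" "c \<in> ct r" "c \<notin> Cs (Suc s) (Lp r)" using rc unfolding Dset_def by auto
    have rV: "r \<in> V" "rep r = r" using rep_of_rep[OF r(1)] by auto
    note vp = valid_props[OF v rV(1)]
    have cL: "c < Lp r" using vp(3)[OF r(2)] by simp
    have c0: "c \<noteq> 0"
    proof
      assume "c = 0"
      then show False using r(3) Lp(1)[OF rV(1)] unfolding Cs_def by simp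
    qed
    define ct' where "ct' = ct(r := ct r - {c})"
    have v': "valid ct' s"
      unfolding valid_def ct'_def using v r(3) unfolding valid_def by auto
    have D': "Dset ct' s = Dset ct s - {(r, c)}"
      unfolding Dset_def ct'_def by (auto split: if_splits)
    have less': "card (Dset ct' s) < card (Dset ct s)"
      unfolding D' using finD rc by (metis card_Diff1_less)
    define p where "p = lab (ct r) (c - 1)"
    have p: "p \<in> ct r" "p < c" using lab_props(1,2)[OF vp(1,2), of "c - 1"] c0 p_def by auto
    have pL: "p < Lp r" using p cL by simp
    have kb: "key ct (hp c r) = (r, c)"
      unfolding key_def using pos_hp_rep[OF r(1) cL] lab_self[OF vp(1,2) r(2)] by simp
    have ka: "key ct (hp p r) = (r, p)"
      unfolding key_def using pos_hp_rep[OF r(1) pL] lab_self[OF vp(1,2) p(1)] by simp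
    have ms: "merge_step (Pc ct) (Pc ct')" unfolding Pc_def
    proof (rule kerf_merge[OF hp_V[OF rV(1)] hp_V[OF rV(1)]])
      show "key ct (hp p r) \<noteq> key ct (hp c r)" using ka kb p by simp
      fix x assume x: "x \<in> V"
      show "key ct' x = (if key ct x = key ct (hp c r) then key ct (hp p r) else key ct x)"
      proof (cases "rep x = r")
        case True
        have "lab (ct r - {c}) (pos x) = (if lab (ct r) (pos x) = c then p else lab (ct r) (pos x))"
          using lab_remove[OF vp(1,2) r(2) c0] p_def by simp
        then show ?thesis using True ka kb unfolding key_def ct'_def by auto
      next
        case False
        then show ?thesis using ka kb unfolding key_def ct'_def by auto
      qed
    qed
    have "stp E D (Pc ct) (Pc ct')"
      unfolding stp_def using ms ok_valid[OF v] ok_valid[OF v'] by simp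
    moreover have "(stp E D)\<^sup>*\<^sup>* (Pc ct') (Pc (\<lambda>r. Cs (Suc s) (Lp r)))"
      using less.hyps[OF less' v'] .
    ultimately show ?thesis by (rule converse_rtranclp_into_rtranclp)
  qed
qed

lemma levels: "(stp E D)\<^sup>*\<^sup>* (Pc (\<lambda>r. Cs 0 (Lp r))) (Pc (\<lambda>r. Cs s (Lp r)))"
proof (induct s)
  case (Suc s)
  have "valid (\<lambda>r. Cs s (Lp r)) s" unfolding valid_def Cs_def
    by (auto intro: dvd_mult_left)
  then show ?case using rtranclp_trans[OF Suc level] by blast
qed simp

definition kerS :: "'a set set" where "kerS = {{y. S x y} | x. x \<in> V}"
definition kerS' :: "'a set set" where "kerS' = {{y. S' x y} | x. x \<in> V}"

lemma Pc0: "Pc (\<lambda>r. Cs 0 (Lp r)) = kerS"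
proof -
  have k: "key (\<lambda>r. Cs 0 (Lp r)) x = (rep x, pos x)" if x: "x \<in> V" for x
  proof -
    have "lab (Cs 0 (Lp (rep x))) (pos x) = pos x"
      by (rule lab_self) (use pos(1)[OF x] Lp(1)[OF rep_V[OF x]] in \<open>auto simp: Cs_def\<close>)
    then show ?thesis unfolding key_def by simp
  qed
  have "{y\<in>V. key (\<lambda>r. Cs 0 (Lp r)) y = key (\<lambda>r. Cs 0 (Lp r)) x} = {y. S x y}" if x: "x \<in> V" for x
  proof (intro equalityI subsetI)
    fix y assume "y \<in> {y\<in>V. key (\<lambda>r. Cs 0 (Lp r)) y = key (\<lambda>r. Cs 0 (Lp r)) x}"
    then have "y \<in> V" "rep y = rep x" "pos y = pos x" using k x by auto
    then show "y \<in> {y. S x y}" using key_S[OF x] by simp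
  next
    fix y assume "y \<in> {y. S x y}"
    then have "S x y" by simp
    then have "y \<in> V" "key (\<lambda>r. Cs 0 (Lp r)) x = key (\<lambda>r. Cs 0 (Lp r)) y"
      using S_V key_eq_S by auto
    then show "y \<in> {y\<in>V. key (\<lambda>r. Cs 0 (Lp r)) y = key (\<lambda>r. Cs 0 (Lp r)) x}" by simp
  qed
  then have "Pc (\<lambda>r. Cs 0 (Lp r)) = (\<lambda>x. {y. S x y}) ` V"
    unfolding Pc_def kerf_image by (rule image_cong[OF refl])
  moreover have "kerS = (\<lambda>x. {y. S x y}) ` V" unfolding kerS_def by blast
  ultimately show ?thesis by simp
qed

lemma Pcn: "Pc (\<lambda>r. Cs n (Lp r)) = kerS'"
proof -
  have k: "key (\<lambda>r. Cs n (Lp r)) x = (rep x, 0)" if x: "x \<in> V" for x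
  proof -
    have r: "rep x \<in> V" using rep_V[OF x] .
    have "Cs n (Lp (rep x)) = {0}"
    proof (intro equalityI subsetI)
      fix j assume "j \<in> Cs n (Lp (rep x))"
      then have "j < Lp (rep x)" "2 ^ n dvd j" unfolding Cs_def by auto
      moreover have "Lp (rep x) < 2 ^ n" using Lp(3)[OF r] less_exp[of n] by linarith
      ultimately show "j \<in> {0}" by (auto dest: dvd_imp_le)
    qed (use Lp(1)[OF r] in \<open>auto simp: Cs_def\<close>)
    moreover have "{c. c = 0 \<and> c \<le> pos x} = {0}" by auto
    ultimately show ?thesis unfolding key_def lab_def by simp
  qed
  have "{y\<in>V. key (\<lambda>r. Cs n (Lp r)) y = key (\<lambda>r. Cs n (Lp r)) x} = {y. S' x y}" if x: "x \<in> V" for x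
  proof (intro equalityI subsetI)
    fix y assume "y \<in> {y\<in>V. key (\<lambda>r. Cs n (Lp r)) y = key (\<lambda>r. Cs n (Lp r)) x}"
    then have y: "y \<in> V" "rep y = rep x" using k x by auto
    have "S' x (rep x)" using S'_sym[OF rep[OF x]] .
    then have "S' x y" using S'_trans[OF _ rep[OF y(1)]] y(2) by simp
    then show "y \<in> {y. S' x y}" by simp
  next
    fix y assume "y \<in> {y. S' x y}"
    then have "S' x y" by simp
    then show "y \<in> {y\<in>V. key (\<lambda>r. Cs n (Lp r)) y = key (\<lambda>r. Cs n (Lp r)) x}"
      using k x rep_eq[of x y] unfolding S'_def by auto
  qed
  then have "Pc (\<lambda>r. Cs n (Lp r)) = (\<lambda>x. {y. S' x y}) ` V"
    unfolding Pc_def kerf_image by (rule image_cong[OF refl])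
  moreover have "kerS' = (\<lambda>x. {y. S' x y}) ` V" unfolding kerS'_def by blast
  ultimately show ?thesis by simp
qed

theorem cyc_main: "(stp E D)\<^sup>*\<^sup>* kerS kerS'"
  using levels[of n] Pc0 Pcn by simp

end

locale setting =
  fixes V :: "'a set" and E :: "'a set set" and \<Gamma> :: "('a \<Rightarrow> 'a) set"
  assumes finV: "finite V"
    and Gsub: "subgroup \<Gamma> (BijGroup V)"
    and GAut: "\<Gamma> \<subseteq> Aut V E"
begin

definition G :: "('a \<Rightarrow> 'a) monoid" where "G = (BijGroup V)\<lparr>carrier := \<Gamma>\<rparr>"

lemma grpG: "group G"
  unfolding G_def by (rule subgroup.subgroup_is_group[OF Gsub group_BijGroup])

sublocale grp: group G by (rule grpG)

lemma carrG [simp]: "carrier G = \<Gamma>" by (simp add: G_def)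

lemma Gclosed [simp]:
  "a \<in> \<Gamma> \<Longrightarrow> b \<in> \<Gamma> \<Longrightarrow> a \<otimes>\<^bsub>G\<^esub> b \<in> \<Gamma>"
  "a \<in> \<Gamma> \<Longrightarrow> inv\<^bsub>G\<^esub> a \<in> \<Gamma>"
  "a \<in> \<Gamma> \<Longrightarrow> a [^]\<^bsub>G\<^esub> (i::nat) \<in> \<Gamma>"
  "\<one>\<^bsub>G\<^esub> \<in> \<Gamma>"
  using grp.m_closed[of a b] grp.inv_closed[of a] grp.nat_pow_closed[of a i] grp.one_closed by auto

lemma GBij: "g \<in> \<Gamma> \<Longrightarrow> g \<in> Bij V"
  using subgroup.subset[OF Gsub] by (auto simp: BijGroup_def)

lemma app_V: "g \<in> \<Gamma> \<Longrightarrow> x \<in> V \<Longrightarrow> g x \<in> V"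
  using GBij Bij_imp_funcset by blast

lemma app_mult: "a \<in> \<Gamma> \<Longrightarrow> b \<in> \<Gamma> \<Longrightarrow> x \<in> V \<Longrightarrow> (a \<otimes>\<^bsub>G\<^esub> b) x = a (b x)"
  using GBij by (simp add: G_def BijGroup_def compose_def)

lemma app_one: "x \<in> V \<Longrightarrow> \<one>\<^bsub>G\<^esub> x = x"
  by (simp add: G_def BijGroup_def)

lemma app_pow: "g \<in> \<Gamma> \<Longrightarrow> x \<in> V \<Longrightarrow> (g [^]\<^bsub>G\<^esub> (i::nat)) x = (g ^^ i) x"
proof (induct i arbitrary: x)
  case 0 then show ?case using app_one by simp
next
  case (Suc i)
  have "g [^]\<^bsub>G\<^esub> i \<in> \<Gamma>" using Suc(2) grp.nat_pow_closed by simp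
  then have "(g [^]\<^bsub>G\<^esub> Suc i) x = (g [^]\<^bsub>G\<^esub> i) (g x)"
    using app_mult[of "g [^]\<^bsub>G\<^esub> i" g x] Suc by simp
  also have "\<dots> = (g ^^ i) (g x)" using Suc app_V by simp
  finally show ?case by (simp only: funpow_Suc_right comp_apply)
qed

lemma app_inv: "g \<in> \<Gamma> \<Longrightarrow> x \<in> V \<Longrightarrow> (inv\<^bsub>G\<^esub> g) (g x) = x"
  using app_mult[of "inv\<^bsub>G\<^esub> g" g x] app_one grp.inv_closed[of g] grp.l_inv[of g] by simp

lemma app_inv2: "g \<in> \<Gamma> \<Longrightarrow> x \<in> V \<Longrightarrow> g ((inv\<^bsub>G\<^esub> g) x) = x"
  using app_mult[of g "inv\<^bsub>G\<^esub> g" x] app_one grp.inv_closed[of g] grp.r_inv[of g] by simp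

lemma aut: "g \<in> \<Gamma> \<Longrightarrow> x \<in> V \<Longrightarrow> y \<in> V \<Longrightarrow> {g x, g y} \<in> E \<longleftrightarrow> {x, y} \<in> E"
  using GAut unfolding Aut_def by blast

lemma finG: "finite \<Gamma>"
proof -
  have "Bij V \<subseteq> PiE V (\<lambda>_. V)"
    unfolding Bij_def PiE_def using bij_betwE by fastforce
  moreover have "\<Gamma> \<subseteq> Bij V" using GBij by blast
  moreover have "finite (PiE V (\<lambda>_. V))" using finV by (simp add: finite_PiE)
  ultimately show ?thesis by (meson finite_subset subset_trans)
qed

definition rel :: "('a \<Rightarrow> 'a) set \<Rightarrow> 'a \<Rightarrow> 'a \<Rightarrow> bool" where
  "rel M x y \<longleftrightarrow> x \<in> V \<and> y \<in> V \<and> (\<exists>g\<in>M. g x = y)"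

definition kerM :: "('a \<Rightarrow> 'a) set \<Rightarrow> 'a set set" where
  "kerM M = {{y. rel M x y} | x. x \<in> V}"

definition ext :: "('a \<Rightarrow> 'a) set \<Rightarrow> ('a \<Rightarrow> 'a) \<Rightarrow> ('a \<Rightarrow> 'a) set" where
  "ext M h = {m \<otimes>\<^bsub>G\<^esub> h [^]\<^bsub>G\<^esub> (i::nat) | m i. m \<in> M}"

lemma comm_pow:
  assumes M: "subgroup M G" and h: "h \<in> \<Gamma>"
    and nrm: "\<forall>m\<in>M. h \<otimes>\<^bsub>G\<^esub> m \<otimes>\<^bsub>G\<^esub> inv\<^bsub>G\<^esub> h \<in> M"
  shows "m \<in> M \<Longrightarrow> \<exists>m'\<in>M. h [^]\<^bsub>G\<^esub> (j::nat) \<otimes>\<^bsub>G\<^esub> m = m' \<otimes>\<^bsub>G\<^esub> h [^]\<^bsub>G\<^esub> j"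
proof (induct j arbitrary: m)
  case 0
  have "m \<in> \<Gamma>" using 0 subgroup.subset[OF M] by auto
  then show ?case using 0 by (intro bexI[of _ m]) auto
next
  case (Suc j)
  have mG: "m \<in> \<Gamma>" using Suc subgroup.subset[OF M] by auto
  define m1 where "m1 = h \<otimes>\<^bsub>G\<^esub> m \<otimes>\<^bsub>G\<^esub> inv\<^bsub>G\<^esub> h"
  have m1: "m1 \<in> M" using nrm Suc(2) m1_def by simp
  have m1G: "m1 \<in> \<Gamma>" using m1 subgroup.subset[OF M] by auto
  have hm: "h \<otimes>\<^bsub>G\<^esub> m = m1 \<otimes>\<^bsub>G\<^esub> h"
    unfolding m1_def using h mG by (simp add: grp.m_assoc)
  obtain m2 where m2: "m2 \<in> M" "h [^]\<^bsub>G\<^esub> j \<otimes>\<^bsub>G\<^esub> m1 = m2 \<otimes>\<^bsub>G\<^esub> h [^]\<^bsub>G\<^esub> j"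
    using Suc(1)[OF m1] by blast
  have m2G: "m2 \<in> \<Gamma>" using m2 subgroup.subset[OF M] by auto
  have "h [^]\<^bsub>G\<^esub> Suc j \<otimes>\<^bsub>G\<^esub> m = h [^]\<^bsub>G\<^esub> j \<otimes>\<^bsub>G\<^esub> (h \<otimes>\<^bsub>G\<^esub> m)"
    using h mG by (simp add: grp.m_assoc)
  also have "\<dots> = (h [^]\<^bsub>G\<^esub> j \<otimes>\<^bsub>G\<^esub> m1) \<otimes>\<^bsub>G\<^esub> h"
    unfolding hm using h m1G by (simp add: grp.m_assoc)
  also have "\<dots> = m2 \<otimes>\<^bsub>G\<^esub> h [^]\<^bsub>G\<^esub> Suc j"
    unfolding m2(2) using h m2G by (simp add: grp.m_assoc)
  finally show ?case using m2(1) by blast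
qed

lemma ext_subgroup:
  assumes M: "subgroup M G" and h: "h \<in> \<Gamma>"
    and nrm: "\<forall>m\<in>M. h \<otimes>\<^bsub>G\<^esub> m \<otimes>\<^bsub>G\<^esub> inv\<^bsub>G\<^esub> h \<in> M"
  shows "subgroup (ext M h) G"
proof -
  have MG: "M \<subseteq> \<Gamma>" using subgroup.subset[OF M] by simp
  note cp = comm_pow[OF M h nrm]
  show ?thesis
  proof (rule grp.subgroupI)
    show "ext M h \<subseteq> carrier G" unfolding ext_def using MG h by auto
    show "ext M h \<noteq> {}" unfolding ext_def using subgroup.one_closed[OF M] by auto
  next
    fix a assume "a \<in> ext M h"
    then obtain m i where a: "m \<in> M" "a = m \<otimes>\<^bsub>G\<^esub> h [^]\<^bsub>G\<^esub> (i::nat)" unfolding ext_def by blast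
    have mG: "m \<in> \<Gamma>" using a MG by auto
    define k where "k = i * (group.ord G h - 1)"
    have o1: "1 \<le> group.ord G h" using grp.ord_ge_1[of h] finG h by simp
    have "h [^]\<^bsub>G\<^esub> k \<otimes>\<^bsub>G\<^esub> h [^]\<^bsub>G\<^esub> i = h [^]\<^bsub>G\<^esub> (k + i)"
      using h by (simp add: grp.nat_pow_mult)
    also have "k + i = group.ord G h * i"
    proof -
      obtain p where "group.ord G h = Suc p" using o1 not0_implies_Suc by fastforce
      then show ?thesis unfolding k_def by simp
    qed
    also have "h [^]\<^bsub>G\<^esub> (group.ord G h * i) = \<one>\<^bsub>G\<^esub>"
      using h by (simp add: grp.nat_pow_pow[symmetric])
    finally have "inv\<^bsub>G\<^esub> (h [^]\<^bsub>G\<^esub> i) = h [^]\<^bsub>G\<^esub> k"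
      using h by (intro grp.inv_equality) auto
    then have ia: "inv\<^bsub>G\<^esub> a = h [^]\<^bsub>G\<^esub> k \<otimes>\<^bsub>G\<^esub> inv\<^bsub>G\<^esub> m"
      using a mG h by (simp add: grp.inv_mult_group)
    obtain m' where "m' \<in> M" "h [^]\<^bsub>G\<^esub> k \<otimes>\<^bsub>G\<^esub> inv\<^bsub>G\<^esub> m = m' \<otimes>\<^bsub>G\<^esub> h [^]\<^bsub>G\<^esub> k"
      using cp[OF subgroup.m_inv_closed[OF M a(1)]] by blast
    then show "inv\<^bsub>G\<^esub> a \<in> ext M h" unfolding ia ext_def by blast
  next
    fix a b assume "a \<in> ext M h" "b \<in> ext M h"
    then obtain m1 i m2 j where a: "m1 \<in> M" "a = m1 \<otimes>\<^bsub>G\<^esub> h [^]\<^bsub>G\<^esub> (i::nat)"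
      and b: "m2 \<in> M" "b = m2 \<otimes>\<^bsub>G\<^esub> h [^]\<^bsub>G\<^esub> (j::nat)" unfolding ext_def by blast
    have G1: "m1 \<in> \<Gamma>" "m2 \<in> \<Gamma>" using a b MG by auto
    obtain m' where m': "m' \<in> M" "h [^]\<^bsub>G\<^esub> i \<otimes>\<^bsub>G\<^esub> m2 = m' \<otimes>\<^bsub>G\<^esub> h [^]\<^bsub>G\<^esub> i"
      using cp[OF b(1)] by blast
    have G2: "m' \<in> \<Gamma>" using m' MG by auto
    have "a \<otimes>\<^bsub>G\<^esub> b = m1 \<otimes>\<^bsub>G\<^esub> (h [^]\<^bsub>G\<^esub> i \<otimes>\<^bsub>G\<^esub> m2) \<otimes>\<^bsub>G\<^esub> h [^]\<^bsub>G\<^esub> j"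
      using a b G1 h by (simp add: grp.m_assoc)
    also have "\<dots> = (m1 \<otimes>\<^bsub>G\<^esub> m') \<otimes>\<^bsub>G\<^esub> (h [^]\<^bsub>G\<^esub> i \<otimes>\<^bsub>G\<^esub> h [^]\<^bsub>G\<^esub> j)"
      unfolding m'(2) using G1 G2 h by (simp add: grp.m_assoc)
    also have "\<dots> = (m1 \<otimes>\<^bsub>G\<^esub> m') \<otimes>\<^bsub>G\<^esub> h [^]\<^bsub>G\<^esub> (i + j)"
      using h by (simp add: grp.nat_pow_mult)
    finally show "a \<otimes>\<^bsub>G\<^esub> b \<in> ext M h"
      unfolding ext_def using subgroup.m_closed[OF M a(1) m'(1)] by blast
  qed
qed

end

context setting
begin

lemma app3: "a \<in> \<Gamma> \<Longrightarrow> b \<in> \<Gamma> \<Longrightarrow> c \<in> \<Gamma> \<Longrightarrow> x \<in> V \<Longrightarrow> (a \<otimes>\<^bsub>G\<^esub> b \<otimes>\<^bsub>G\<^esub> c) x = a (b (c x))"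
  using app_mult app_V by simp

lemma sub_pow: "subgroup H G \<Longrightarrow> h \<in> H \<Longrightarrow> h [^]\<^bsub>G\<^esub> (i::nat) \<in> H"
proof (induct i)
  case 0 then show ?case using subgroup.one_closed by simp
next
  case (Suc i) then show ?case using subgroup.m_closed[of H G] by simp
qed

lemma degle: "v \<in> V \<Longrightarrow> card {w\<in>V. {v, w} \<in> E} \<le> max_degree V E"
  unfolding max_degree_def degree_def using finV by (intro Max_ge) auto

lemma cyc_step:
  assumes M: "subgroup M G" and h: "h \<in> \<Gamma>"
    and nrm1: "\<forall>m\<in>M. h \<otimes>\<^bsub>G\<^esub> m \<otimes>\<^bsub>G\<^esub> inv\<^bsub>G\<^esub> h \<in> M"
    and nrm2: "\<forall>m\<in>M. inv\<^bsub>G\<^esub> h \<otimes>\<^bsub>G\<^esub> m \<otimes>\<^bsub>G\<^esub> h \<in> M"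
  shows "(stp E (max_degree V E))\<^sup>*\<^sup>* (kerM M) (kerM (ext M h))"
proof -
  have MG: "\<And>m. m \<in> M \<Longrightarrow> m \<in> \<Gamma>" using subgroup.subset[OF M] by auto
  interpret c: cyc V E "rel M" h "group.ord G h" "max_degree V E"
  proof (unfold_locales)
    show "finite V" by (rule finV)
    show "\<And>x y. rel M x y \<Longrightarrow> x \<in> V \<and> y \<in> V" unfolding rel_def by auto
    show "\<And>x. x \<in> V \<Longrightarrow> rel M x x"
      unfolding rel_def using subgroup.one_closed[OF M] app_one by blast
    show "rel M y x" if rr: "rel M x y" for x y
    proof -
      obtain g where g: "x \<in> V" "y \<in> V" "g \<in> M" "g x = y" using rr unfolding rel_def by blast
      have "(inv\<^bsub>G\<^esub> g) y = x" using app_inv[OF MG[OF g(3)] g(1)] g(4) by simp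
      then show ?thesis unfolding rel_def using g subgroup.m_inv_closed[OF M g(3)] by blast
    qed
    show "rel M x z" if rr: "rel M x y" "rel M y z" for x y z
    proof -
      obtain g1 g2 where g: "x \<in> V" "y \<in> V" "z \<in> V" "g1 \<in> M" "g1 x = y" "g2 \<in> M" "g2 y = z"
        using rr unfolding rel_def by blast
      have "(g2 \<otimes>\<^bsub>G\<^esub> g1) x = z" using app_mult[OF MG[OF g(6)] MG[OF g(4)] g(1)] g by simp
      then show ?thesis unfolding rel_def using g subgroup.m_closed[OF M g(6) g(4)] by blast
    qed
    show "\<And>x. x \<in> V \<Longrightarrow> h x \<in> V" using app_V[OF h] .
    show "rel M (h x) (h y) \<longleftrightarrow> rel M x y" if xy: "x \<in> V" "y \<in> V" for x y
    proof
      assume "rel M (h x) (h y)"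
      then obtain g where g: "g \<in> M" "g (h x) = h y" unfolding rel_def by blast
      have "(inv\<^bsub>G\<^esub> h \<otimes>\<^bsub>G\<^esub> g \<otimes>\<^bsub>G\<^esub> h) x = y"
        using app3[OF _ MG[OF g(1)] h xy(1)] h g(2) app_inv[OF h xy(2)] by simp
      then show "rel M x y" unfolding rel_def using xy nrm2 g(1) by blast
    next
      assume "rel M x y"
      then obtain g where g: "g \<in> M" "g x = y" unfolding rel_def by blast
      have "(h \<otimes>\<^bsub>G\<^esub> g \<otimes>\<^bsub>G\<^esub> inv\<^bsub>G\<^esub> h) (h x) = h y"
        using app3[OF h MG[OF g(1)] _ app_V[OF h xy(1)]] h g(2) app_inv[OF h xy(1)] by simp
      then show "rel M (h x) (h y)" unfolding rel_def using xy app_V[OF h] nrm1 g(1) by blast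
    qed
    show "\<And>x y. x \<in> V \<Longrightarrow> y \<in> V \<Longrightarrow> {h x, h y} \<in> E \<longleftrightarrow> {x, y} \<in> E" using aut[OF h] .
    show "0 < group.ord G h" using grp.ord_ge_1[of h] finG h by simp
    show "(h ^^ group.ord G h) x = x" if x: "x \<in> V" for x
      using app_pow[OF h x, of "group.ord G h"] grp.pow_ord_eq_1[of h] h app_one[OF x] by simp
    show "\<exists>w\<in>V. {v, w} \<in> E \<and> rel M w y"
      if v: "v \<in> V" "x \<in> V" "y \<in> V" "rel M v x" "{x, y} \<in> E" for v x y
    proof -
      obtain g where g: "g \<in> M" "g v = x" using v(4) unfolding rel_def by blast
      have gG: "g \<in> \<Gamma>" using MG[OF g(1)] .
      define w where "w = (inv\<^bsub>G\<^esub> g) y"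
      have wV: "w \<in> V" unfolding w_def using app_V[OF _ v(3)] gG by simp
      have "{(inv\<^bsub>G\<^esub> g) x, (inv\<^bsub>G\<^esub> g) y} \<in> E" using aut[of "inv\<^bsub>G\<^esub> g" x y] gG v by simp
      moreover have "(inv\<^bsub>G\<^esub> g) x = v" using app_inv[OF gG v(1)] g(2) by simp
      ultimately have "{v, w} \<in> E" unfolding w_def by simp
      moreover have "g w = y" unfolding w_def using app_inv2[OF gG v(3)] .
      ultimately show ?thesis unfolding rel_def using wV v(3) g(1) by blast
    qed
    show "\<And>v. v \<in> V \<Longrightarrow> card {w\<in>V. {v, w} \<in> E} \<le> max_degree V E" by (rule degle)
  qed
  have "c.kerS = kerM M" unfolding c.kerS_def kerM_def by simp
  moreover have "c.kerS' = kerM (ext M h)"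
  proof -
    have eqpt: "c.S' x y = rel (ext M h) x y" for x y
    proof
      assume "c.S' x y"
      then obtain i where i: "x \<in> V" "y \<in> V" "rel M ((h ^^ i) x) y" unfolding c.S'_def by blast
      then obtain m where m: "m \<in> M" "m ((h ^^ i) x) = y" unfolding rel_def by blast
      have "(m \<otimes>\<^bsub>G\<^esub> h [^]\<^bsub>G\<^esub> i) x = y"
        using app_mult[OF MG[OF m(1)] _ i(1), of "h [^]\<^bsub>G\<^esub> i"] app_pow[OF h i(1)] m(2) h by simp
      then show "rel (ext M h) x y" unfolding rel_def ext_def using i m(1) by blast
    next
      assume "rel (ext M h) x y"
      then obtain m i where mi: "x \<in> V" "y \<in> V" "m \<in> M" "(m \<otimes>\<^bsub>G\<^esub> h [^]\<^bsub>G\<^esub> (i::nat)) x = y"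
        unfolding rel_def ext_def by blast
      have "m ((h ^^ i) x) = y"
        using app_mult[OF MG[OF mi(3)] _ mi(1), of "h [^]\<^bsub>G\<^esub> i"] app_pow[OF h mi(1)] mi(4) h by simp
      moreover have "(h ^^ i) x \<in> V" using c.hp_V[OF mi(1)] .
      ultimately have "rel M ((h ^^ i) x) y" unfolding rel_def using mi by blast
      then show "c.S' x y" unfolding c.S'_def using mi by blast
    qed
    have "c.S' = rel (ext M h)" by (intro HOL.ext) (rule eqpt)
    then show ?thesis unfolding c.kerS'_def kerM_def by simp
  qed
  ultimately show ?thesis using c.cyc_main by simp
qed

end

context setting
begin

lemma abel_step:
  assumes H: "subgroup H G" and K: "subgroup K G" and KH: "K \<subseteq> H"
    and comm: "\<forall>a\<in>H. \<forall>b\<in>H. a \<otimes>\<^bsub>G\<^esub> b \<otimes>\<^bsub>G\<^esub> inv\<^bsub>G\<^esub> a \<otimes>\<^bsub>G\<^esub> inv\<^bsub>G\<^esub> b \<in> K"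
  shows "subgroup M G \<Longrightarrow> K \<subseteq> M \<Longrightarrow> M \<subseteq> H \<Longrightarrow> (stp E (max_degree V E))\<^sup>*\<^sup>* (kerM M) (kerM H)"
proof (induction "card (H - M)" arbitrary: M rule: less_induct)
  case less
  note M = less.prems(1) and KM = less.prems(2) and MH = less.prems(3)
  have HG0: "H \<subseteq> \<Gamma>" using subgroup.subset[OF H] by simp
  have HG: "\<And>x. x \<in> H \<Longrightarrow> x \<in> \<Gamma>" using HG0 by blast
  have finH: "finite H" using finite_subset[OF HG0 finG] .
  show ?case
  proof (cases "M = H")
    case True then show ?thesis by simp
  next
    case False
    then obtain h where h: "h \<in> H" "h \<notin> M" using MH by blast
    have hG: "h \<in> \<Gamma>" using HG[OF h(1)] .
    have nrm1: "\<forall>m\<in>M. h \<otimes>\<^bsub>G\<^esub> m \<otimes>\<^bsub>G\<^esub> inv\<^bsub>G\<^esub> h \<in> M"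
    proof
      fix m assume m: "m \<in> M"
      have mG: "m \<in> \<Gamma>" using HG0 MH m by blast
      have "inv\<^bsub>G\<^esub> m \<otimes>\<^bsub>G\<^esub> h \<otimes>\<^bsub>G\<^esub> inv\<^bsub>G\<^esub> (inv\<^bsub>G\<^esub> m) \<otimes>\<^bsub>G\<^esub> inv\<^bsub>G\<^esub> h \<in> K"
        using comm subgroup.m_inv_closed[OF H] MH m h(1) by blast
      then have c: "inv\<^bsub>G\<^esub> m \<otimes>\<^bsub>G\<^esub> h \<otimes>\<^bsub>G\<^esub> m \<otimes>\<^bsub>G\<^esub> inv\<^bsub>G\<^esub> h \<in> M"
        using KM mG by auto
      have "h \<otimes>\<^bsub>G\<^esub> m \<otimes>\<^bsub>G\<^esub> inv\<^bsub>G\<^esub> h = m \<otimes>\<^bsub>G\<^esub> (inv\<^bsub>G\<^esub> m \<otimes>\<^bsub>G\<^esub> h \<otimes>\<^bsub>G\<^esub> m \<otimes>\<^bsub>G\<^esub> inv\<^bsub>G\<^esub> h)"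
        using mG hG by (simp add: grp.m_assoc[symmetric])
      then show "h \<otimes>\<^bsub>G\<^esub> m \<otimes>\<^bsub>G\<^esub> inv\<^bsub>G\<^esub> h \<in> M" using subgroup.m_closed[OF M m c] by simp
    qed
    have nrm2: "\<forall>m\<in>M. inv\<^bsub>G\<^esub> h \<otimes>\<^bsub>G\<^esub> m \<otimes>\<^bsub>G\<^esub> h \<in> M"
    proof
      fix m assume m: "m \<in> M"
      have mG: "m \<in> \<Gamma>" using HG0 MH m by blast
      have "inv\<^bsub>G\<^esub> m \<otimes>\<^bsub>G\<^esub> inv\<^bsub>G\<^esub> h \<otimes>\<^bsub>G\<^esub> inv\<^bsub>G\<^esub> (inv\<^bsub>G\<^esub> m) \<otimes>\<^bsub>G\<^esub> inv\<^bsub>G\<^esub> (inv\<^bsub>G\<^esub> h) \<in> K"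
        using comm subgroup.m_inv_closed[OF H] MH m h(1) by blast
      then have c: "inv\<^bsub>G\<^esub> m \<otimes>\<^bsub>G\<^esub> inv\<^bsub>G\<^esub> h \<otimes>\<^bsub>G\<^esub> m \<otimes>\<^bsub>G\<^esub> h \<in> M"
        using KM mG hG by auto
      have "inv\<^bsub>G\<^esub> h \<otimes>\<^bsub>G\<^esub> m \<otimes>\<^bsub>G\<^esub> h = m \<otimes>\<^bsub>G\<^esub> (inv\<^bsub>G\<^esub> m \<otimes>\<^bsub>G\<^esub> inv\<^bsub>G\<^esub> h \<otimes>\<^bsub>G\<^esub> m \<otimes>\<^bsub>G\<^esub> h)"
        using mG hG by (simp add: grp.m_assoc[symmetric])
      then show "inv\<^bsub>G\<^esub> h \<otimes>\<^bsub>G\<^esub> m \<otimes>\<^bsub>G\<^esub> h \<in> M" using subgroup.m_closed[OF M m c] by simp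
    qed
    define M' where "M' = ext M h"
    have M': "subgroup M' G" unfolding M'_def by (rule ext_subgroup[OF M hG nrm1])
    have MM': "M \<subseteq> M'"
    proof
      fix m assume "m \<in> M"
      moreover have "m = m \<otimes>\<^bsub>G\<^esub> h [^]\<^bsub>G\<^esub> (0::nat)" using HG MH calculation by auto
      ultimately show "m \<in> M'" unfolding M'_def ext_def by blast
    qed
    have hM': "h \<in> M'"
    proof -
      have "h = \<one>\<^bsub>G\<^esub> \<otimes>\<^bsub>G\<^esub> h [^]\<^bsub>G\<^esub> (1::nat)" using hG by simp
      then show ?thesis unfolding M'_def ext_def using subgroup.one_closed[OF M] by blast
    qed
    have M'H: "M' \<subseteq> H"
    proof
      fix x assume "x \<in> M'"
      then obtain m i where "m \<in> M" "x = m \<otimes>\<^bsub>G\<^esub> h [^]\<^bsub>G\<^esub> (i::nat)" unfolding M'_def ext_def by blast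
      then show "x \<in> H" using subgroup.m_closed[OF H] sub_pow[OF H h(1)] MH by blast
    qed
    have "H - M' \<subset> H - M" using MM' hM' h by blast
    moreover have "finite (H - M)" using finH by simp
    ultimately have lt: "card (H - M') < card (H - M)" by (simp add: psubset_card_mono)
    have "(stp E (max_degree V E))\<^sup>*\<^sup>* (kerM M) (kerM M')"
      unfolding M'_def by (rule cyc_step[OF M hG nrm1 nrm2])
    moreover have "(stp E (max_degree V E))\<^sup>*\<^sup>* (kerM M') (kerM H)"
      using less.hyps[OF lt M'] KM MM' M'H by blast
    ultimately show ?thesis by (rule rtranclp_trans)
  qed
qed

lemma solv: "solvable_seq G H \<Longrightarrow> (stp E (max_degree V E))\<^sup>*\<^sup>* (singletons V) (kerM H)"
proof (induction rule: solvable_seq.induct)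
  case unity
  have "kerM {\<one>\<^bsub>G\<^esub>} = singletons V"
  proof -
    have "{y. rel {\<one>\<^bsub>G\<^esub>} x y} = {x}" if "x \<in> V" for x
      unfolding rel_def using that app_one by auto
    then show ?thesis unfolding kerM_def singletons_def by blast
  qed
  then show ?case by simp
next
  case (extension K H)
  have sK: "subgroup K (G\<lparr>carrier := H\<rparr>)" using normal_imp_subgroup[OF extension.hyps(2)] .
  have K: "subgroup K G" using grp.incl_subgroup[OF extension.hyps(3) sK] .
  have KH: "K \<subseteq> H" using subgroup.subset[OF sK] by simp
  have der: "derived G H \<subseteq> K"
    using grp.derived_of_subgroup_minimal[OF extension.hyps(2,3,4)] .
  have comm: "\<forall>a\<in>H. \<forall>b\<in>H. a \<otimes>\<^bsub>G\<^esub> b \<otimes>\<^bsub>G\<^esub> inv\<^bsub>G\<^esub> a \<otimes>\<^bsub>G\<^esub> inv\<^bsub>G\<^esub> b \<in> K"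
  proof (intro ballI)
    fix a b assume "a \<in> H" "b \<in> H"
    then have "a \<otimes>\<^bsub>G\<^esub> b \<otimes>\<^bsub>G\<^esub> inv\<^bsub>G\<^esub> a \<otimes>\<^bsub>G\<^esub> inv\<^bsub>G\<^esub> b \<in> derived_set G H" by blast
    then have "a \<otimes>\<^bsub>G\<^esub> b \<otimes>\<^bsub>G\<^esub> inv\<^bsub>G\<^esub> a \<otimes>\<^bsub>G\<^esub> inv\<^bsub>G\<^esub> b \<in> derived G H"
      unfolding derived_def by (rule generate.incl)
    then show "a \<otimes>\<^bsub>G\<^esub> b \<otimes>\<^bsub>G\<^esub> inv\<^bsub>G\<^esub> a \<otimes>\<^bsub>G\<^esub> inv\<^bsub>G\<^esub> b \<in> K" using der by blast
  qed
  have "(stp E (max_degree V E))\<^sup>*\<^sup>* (kerM K) (kerM H)"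
    using abel_step[OF extension.hyps(3) K KH comm K] KH by simp
  then show ?case using extension.IH by (rule rtranclp_trans[rotated])
qed

lemma kerM_Gamma: "kerM \<Gamma> = orbit_partition V \<Gamma>"
proof -
  have "{y. rel \<Gamma> x y} = {g x | g. g \<in> \<Gamma>}" if "x \<in> V" for x
    unfolding rel_def using that app_V by auto
  then show ?thesis unfolding kerM_def orbit_partition_def by blast
qed

end

lemma stp_list:
  assumes "(stp E D)\<^sup>*\<^sup>* P Q" and "okp E D P"
  shows "\<exists>Ps. Ps \<noteq> [] \<and> hd Ps = P \<and> last Ps = Q \<and>
    (\<forall>i. Suc i < length Ps \<longrightarrow> merge_step (Ps ! i) (Ps ! Suc i)) \<and> (\<forall>X\<in>set Ps. okp E D X)"
  using assms(1)
proof (induction rule: rtranclp_induct)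
  case base
  show ?case using assms(2) by (intro exI[of _ "[P]"]) simp
next
  case (step Y Z)
  obtain Ps where Ps: "Ps \<noteq> []" "hd Ps = P" "last Ps = Y"
    "\<forall>i. Suc i < length Ps \<longrightarrow> merge_step (Ps ! i) (Ps ! Suc i)" "\<forall>X\<in>set Ps. okp E D X"
    using step.IH by blast
  have st: "merge_step Y Z" "okp E D Z" using step.hyps(2) unfolding stp_def by auto
  have "\<forall>i. Suc i < length (Ps @ [Z]) \<longrightarrow> merge_step ((Ps @ [Z]) ! i) ((Ps @ [Z]) ! Suc i)"
  proof (intro allI impI)
    fix i assume i: "Suc i < length (Ps @ [Z])"
    show "merge_step ((Ps @ [Z]) ! i) ((Ps @ [Z]) ! Suc i)"
    proof (cases "Suc i < length Ps")
      case True
      then show ?thesis using Ps(4) by (simp add: nth_append)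
    next
      case False
      then have "Suc i = length Ps" using i by simp
      moreover have "i = length Ps - 1" using calculation by simp
      moreover have "Ps ! i = Y" using Ps(1,3) calculation(2) by (simp add: last_conv_nth)
      ultimately show ?thesis using st(1) by (simp add: nth_append)
    qed
  qed
  then show ?case using Ps st by (intro exI[of _ "Ps @ [Z]"]) auto
qed

lemma ok_singletons:
  assumes fin: "finite V" and E: "\<forall>v\<in>V. card {w\<in>V. {v, w} \<in> E} \<le> D"
    and EV: "E \<subseteq> {{u, v} | u v. u \<in> V \<and> v \<in> V \<and> u \<noteq> v}"
  shows "okp E D (singletons V)"
proof -
  have sv: "singletons V = (\<lambda>v. {v}) ` V" unfolding singletons_def by blast
  have "card {W\<in>singletons V. W \<noteq> U \<and> adj E U W} \<le> 4 * D" if U: "U \<in> singletons V" for U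
  proof -
    obtain v where v: "v \<in> V" "U = {v}" using U sv by auto
    have "{W\<in>singletons V. W \<noteq> U \<and> adj E U W} \<subseteq> (\<lambda>w. {w}) ` {w\<in>V. {v, w} \<in> E}"
      unfolding adj_def using v sv by auto
    then have "card {W\<in>singletons V. W \<noteq> U \<and> adj E U W} \<le> card ((\<lambda>w. {w}) ` {w\<in>V. {v, w} \<in> E})"
      using fin by (intro card_mono) auto
    also have "\<dots> \<le> card {w\<in>V. {v, w} \<in> E}" by (rule card_image_le) (use fin in simp)
    also have "\<dots> \<le> D" using E v by simp
    finally show ?thesis by simp
  qed
  then show ?thesis unfolding okp_def sv using fin by auto
qed

lemma red_le:
  assumes "okp E D P" "U \<in> P"
  shows "red_degree E R P U \<le> 4 * D"
proof -
  have "{W\<in>P. W \<noteq> U \<and> red_pair E R U W} \<subseteq> {W\<in>P. W \<noteq> U \<and> adj E U W}"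
    unfolding red_pair_def nonadj_pair_def adj_def by blast
  then have "red_degree E R P U \<le> card {W\<in>P. W \<noteq> U \<and> adj E U W}"
    unfolding red_degree_def using assms(1) unfolding okp_def by (intro card_mono) auto
  also have "\<dots> \<le> 4 * D" using assms unfolding okp_def by blast
  finally show ?thesis .
qed

theorem mainTheorem16:
  fixes V :: "'a set" and E R :: "'a set set" and \<Gamma> :: "('a \<Rightarrow> 'a) set"
  assumes "trigraph V E R"
    and "subgroup \<Gamma> (BijGroup V)"
    and "\<Gamma> \<subseteq> Aut V E"
    and "solvable ((BijGroup V)\<lparr>carrier := \<Gamma>\<rparr>)"
  shows "\<exists>Ps. partial_contraction_seq V Ps \<and> seq_width_le E R Ps (4 * max_degree V E)
             \<and> last Ps = orbit_partition V \<Gamma>"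
proof -
  have finV: "finite V" and EV: "E \<subseteq> {{u, v} | u v. u \<in> V \<and> v \<in> V \<and> u \<noteq> v}"
    using assms(1) unfolding trigraph_def by auto
  interpret setting V E \<Gamma> by (rule setting.intro[OF finV assms(2) assms(3)])
  have "solvable_seq G (carrier G)" using assms(4) unfolding solvable_def G_def by simp
  then have "solvable_seq G \<Gamma>" by simp
  then have "(stp E (max_degree V E))\<^sup>*\<^sup>* (singletons V) (orbit_partition V \<Gamma>)"
    using solv[OF \<open>solvable_seq G \<Gamma>\<close>] kerM_Gamma by simp
  moreover have "okp E (max_degree V E) (singletons V)"
    using ok_singletons[OF finV _ EV] degle by blast
  ultimately obtain Ps where Ps: "Ps \<noteq> []" "hd Ps = singletons V" "last Ps = orbit_partition V \<Gamma>"
    "\<forall>i. Suc i < length Ps \<longrightarrow> merge_step (Ps ! i) (Ps ! Suc i)"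
    "\<forall>X\<in>set Ps. okp E (max_degree V E) X"
    using stp_list by blast
  have "partial_contraction_seq V Ps" unfolding partial_contraction_seq_def using Ps by simp
  moreover have "seq_width_le E R Ps (4 * max_degree V E)"
    unfolding seq_width_le_def using Ps(5) red_le by blast
  ultimately show ?thesis using Ps(3) by blast
qed

end
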